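(* Let $K$ and $K'$ be two non-degenerate CMIs, with $\mathrm{can}(\mathrm{pur}(K))=(C,\langle\mathbb I_K,\mathbb I_K,P_i,1\le i\le t\rangle)$. Let $K''=R_K^{K'}$ and $\mathrm{can}(\mathrm{pur}(K''))=(C'',\langle\mathbb I_{K''},\mathbb I_{K''},P''_j,1\le j\le r\rangle)$. If $K$ implies $K'$ and $R_K^{K'}\ne(\cdot,\langle\ \rangle)$, then for any $m_1\in P''_{j_1}$ and $m_2\in P''_{j_2}$ with $1\le j_1,j_2\le r$, $j_1\ne j_2$, we have $m_1\in P_{i_1}$ and $m_2\in P_{i_2}$ for some $1\le i_1,i_2\le t$ with $i_1\ne i_2$.
   Context: Setting: $X_1,\dots,X_n$ jointly distributed discrete random variables with $H(X_i)<\infty$; distribution unspecified. $X_\alpha=(X_i,i\in\alpha)$, $X_\emptyset$ constant. A CMI is $K=(C,\langle Q_1,\dots,Q_k\rangle)$, $k\ge0$, $C\subseteq\{1,\dots,n\}$, $\langle\cdot\rangle$ an unordered multiset of subsets; valid (for a given distribution) if $\sum_iH(X_{Q_i}|X_C)-H(X_{Q_1},\dots,X_{Q_k}|X_C)=0$. Empty members may be deleted. Degenerate = valid for every distribution, written $(\cdot,\langle\ \rangle)$. "$K$ implies $K'$": for every joint distribution, if $K$ is valid then $K'$ is valid. $\mathrm{pur}(K)=(C,\langle Q_i\setminus C:Q_i\setminus C\ne\emptyset\rangle)$. For pure $K$: $\mathbb I_K$ = indices lying in at least two members of the collection if $k\ge2$, else $\emptyset$; $P_1,\dots,P_t$ the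 nonempty sets among $Q_i\setminus\mathbb I_K$; $\mathrm{can}(K)=(\cdot,\langle\ \rangle)$ if $k\le1$, $(C,\langle\mathbb I_K,\mathbb I_K\rangle)$ if $k\ge2,\mathbb I_K\ne\emptyset,t\le1$, $(C,\langle P_1..P_t\rangle)$ if $k\ge2,\mathbb I_K=\emptyset$, $(C,\langle\mathbb I_K,\mathbb I_K,P_1..P_t\rangle)$ if $k\ge2,\mathbb I_K\ne\emptyset,t\ge2$. For general $K$, $\mathbb I_K$ is the repeated-index set of $\mathrm{pur}(K)$; general-form notation omits the copies of $\mathbb I_K$ when empty and uses $t=0$ for $(C,\langle\mathbb I_K,\mathbb I_K\rangle)$. $R_K^{K'}$: with $\mathrm{can}(\mathrm{pur}(K'))=(C',\langle\mathbb I_{K'},\mathbb I_{K'},P'_j,1\le j\le s\rangle)$, $D=\mathbb I_{K'}\setminus\mathbb I_K$ and $T_1,\dots,T_u$ the nonempty sets among $P'_j\setminus\mathbb I_K$: $R_K^{K'}=(\cdot,\langle\ \rangle)$ if $D=\emptyset,u\le1$; $(C'\setminus\mathbb I_K,\langle T_1..T_u\rangle)$ if $D=\emptyset,u\ge2$; $(C'\setminus\mathbb I_K,\langle D,D\rangle)$ if $D\ne\emptyset,u\le1$; $(C'\setminus\mathbb I_K,\langle D,D,T_1..T_u\rangle)$ if $D\ne\emptyset,u\ge2$. *)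

theory Defs
  imports "HOL-Probability.Probability"
begin

text \<open>Joint distributions of X_1..X_n: a discrete (countable support) distribution of
  outcomes omega :: nat => nat, where X_i = omega i (values encoded in a countable set).\<close>

type_synonym cmi = "nat set \<times> nat set multiset"

definition marg :: "(nat \<Rightarrow> nat) pmf \<Rightarrow> nat set \<Rightarrow> (nat \<Rightarrow> nat) pmf" where
  "marg p \<alpha> = map_pmf (\<lambda>\<omega> i. if i \<in> \<alpha> then \<omega> i else 0) p"

definition ent_term :: "'a pmf \<Rightarrow> 'a \<Rightarrow> real" where
  "ent_term q x = - pmf q x * log 2 (pmf q x)"

definition ent :: "'a pmf \<Rightarrow> real" where
  "ent q = infsum (ent_term q) UNIV"

definition Hent :: "(nat \<Rightarrow> nat) pmf \<Rightarrow> nat set \<Rightarrow> real" where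
  "Hent p \<alpha> = ent (marg p \<alpha>)"

definition condH :: "(nat \<Rightarrow> nat) pmf \<Rightarrow> nat set \<Rightarrow> nat set \<Rightarrow> real" where
  "condH p A C = Hent p (A \<union> C) - Hent p C"

text \<open>admissible joint distribution: every H(X_i), 1 <= i <= n, finite\<close>
definition dist_ok :: "nat \<Rightarrow> (nat \<Rightarrow> nat) pmf \<Rightarrow> bool" where
  "dist_ok n p = (\<forall>i\<in>{1..n}. ent_term (marg p {i}) summable_on UNIV)"

definition wf_cmi :: "nat \<Rightarrow> cmi \<Rightarrow> bool" where
  "wf_cmi n K = (fst K \<subseteq> {1..n} \<and> (\<forall>Q\<in>#snd K. Q \<subseteq> {1..n}))"

definition valid :: "(nat \<Rightarrow> nat) pmf \<Rightarrow> cmi \<Rightarrow> bool" where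
  "valid p K = ((\<Sum>Q\<in>#snd K. condH p Q (fst K)) - condH p (\<Union>(set_mset (snd K))) (fst K) = 0)"

definition degenerate :: "nat \<Rightarrow> cmi \<Rightarrow> bool" where
  "degenerate n K = (\<forall>p. dist_ok n p \<longrightarrow> valid p K)"

definition cmi_implies :: "nat \<Rightarrow> cmi \<Rightarrow> cmi \<Rightarrow> bool" where
  "cmi_implies n K K' = (\<forall>p. dist_ok n p \<longrightarrow> valid p K \<longrightarrow> valid p K')"

definition pur :: "cmi \<Rightarrow> cmi" where
  "pur K = (fst K, filter_mset (\<lambda>S. S \<noteq> {}) (image_mset (\<lambda>Q. Q - fst K) (snd K)))"

definition rep_idx :: "nat set multiset \<Rightarrow> nat set" where
  "rep_idx Qs = (if 2 \<le> size Qs then {i. 2 \<le> size (filter_mset (\<lambda>Q. i \<in> Q) Qs)} else {})"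

definition IK :: "cmi \<Rightarrow> nat set" where
  "IK K = rep_idx (snd (pur K))"

definition dup :: "nat set \<Rightarrow> nat set multiset" where
  "dup I = (if I = {} then {#} else {#I, I#})"

text \<open>canonical form of a pure CMI; None stands for the degenerate symbol (.,< >)\<close>
definition can :: "cmi \<Rightarrow> cmi option" where
  "can K = (let C = fst K; Qs = snd K; I = rep_idx Qs;
              Ps = filter_mset (\<lambda>S. S \<noteq> {}) (image_mset (\<lambda>Q. Q - I) Qs) in
     if size Qs \<le> 1 then None
     else if I \<noteq> {} \<and> size Ps \<le> 1 then Some (C, {#I, I#})
     else if I = {} then Some (C, Ps)
     else Some (C, {#I, I#} + Ps))"

text \<open>R_K^K'; None stands for (.,< >)\<close>
definition R :: "cmi \<Rightarrow> cmi \<Rightarrow> cmi option" where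
  "R K K' = (case can (pur K') of None \<Rightarrow> None
     | Some (C', Q') \<Rightarrow>
        (let I = IK K; D = IK K' - I;
             Ts = filter_mset (\<lambda>S. S \<noteq> {}) (image_mset (\<lambda>P. P - I) (Q' - dup (IK K'))) in
         if D = {} \<and> size Ts \<le> 1 then None
         else if D = {} then Some (C' - I, Ts)
         else if size Ts \<le> 1 then Some (C' - I, {#D, D#})
         else Some (C' - I, {#D, D#} + Ts)))"

end

theory Submission imports Defs begin

definition om :: "nat set \<Rightarrow> nat \<Rightarrow> nat \<Rightarrow> nat" where
  "om M b = (\<lambda>i. if i \<in> M then b else 0)"

definition pp :: "nat set \<Rightarrow> (nat \<Rightarrow> nat) pmf" where
  "pp M = pmf_of_set {om M 0, om M 1}"

lemma ent_term_zero: "x \<notin> set_pmf q \<Longrightarrow> ent_term q x = 0"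
  by (simp add: ent_term_def set_pmf_iff)

lemma ent_summable: "finite (set_pmf q) \<Longrightarrow> ent_term q summable_on UNIV"
proof -
  assume f: "finite (set_pmf q)"
  have "ent_term q summable_on set_pmf q" using f by simp
  then show ?thesis
    by (rule summable_on_cong_neutral[THEN iffD1, rotated -1]) (auto simp: ent_term_zero)
qed

lemma ent_fin: "finite (set_pmf q) \<Longrightarrow> ent q = sum (ent_term q) (set_pmf q)"
proof -
  assume f: "finite (set_pmf q)"
  have "ent q = infsum (ent_term q) (set_pmf q)"
    unfolding ent_def by (rule infsum_cong_neutral) (auto simp: ent_term_zero)
  then show ?thesis using f by simp
qed

lemma ent_return: "ent (return_pmf c) = 0"
  by (subst ent_fin) (auto simp: ent_term_def)

lemma ent_pmf_of_set: "finite S \<Longrightarrow> S \<noteq> {} \<Longrightarrow> ent (pmf_of_set S) = log 2 (card S)"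
proof -
  assume f: "finite S" and ne: "S \<noteq> {}"
  then have c: "card S > 0" by (simp add: card_gt_0_iff)
  have "ent (pmf_of_set S) = (\<Sum>x\<in>S. - (1 / card S) * log 2 (1 / card S))"
    using f ne by (subst ent_fin) (auto simp: ent_term_def)
  also have "\<dots> = log 2 (card S)" using c by (simp add: log_divide)
  finally show ?thesis .
qed

lemma om_ne: "M \<noteq> {} \<Longrightarrow> om M 0 \<noteq> om M 1"
  by (auto simp: om_def fun_eq_iff)

lemma Hent_pp: assumes "M \<noteq> {}"
  shows "Hent (pp M) \<alpha> = (if \<alpha> \<inter> M = {} then 0 else 1)"
proof (cases "\<alpha> \<inter> M = {}")
  case True
  have "marg (pp M) \<alpha> = map_pmf (\<lambda>_. (\<lambda>i. 0)) (pp M)"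
    unfolding marg_def pp_def
    by (rule map_pmf_cong) (use True in \<open>auto simp: om_def fun_eq_iff\<close>)
  then show ?thesis using True by (simp add: Hent_def ent_return)
next
  case False
  define r where "r = (\<lambda>\<omega>::nat\<Rightarrow>nat. \<lambda>i. if i \<in> \<alpha> then \<omega> i else 0)"
  have ne: "r (om M 0) \<noteq> r (om M 1)" using False by (auto simp: r_def om_def fun_eq_iff)
  have inj: "inj_on r {om M 0, om M 1}" using ne by (auto simp: inj_on_def)
  have "marg (pp M) \<alpha> = pmf_of_set (r ` {om M 0, om M 1})"
    unfolding marg_def pp_def r_def[symmetric] by (rule map_pmf_of_set_inj[OF inj]) auto
  then show ?thesis using False ne by (simp add: Hent_def ent_pmf_of_set)
qed

lemma dist_ok_pp: "dist_ok n (pp M)"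
  unfolding dist_ok_def
  by (auto intro!: ent_summable simp: marg_def pp_def)

lemma condH_pp: "M \<noteq> {} \<Longrightarrow> condH (pp M) Q C = (if C \<inter> M = {} \<and> Q \<inter> M \<noteq> {} then 1 else 0)"
  by (auto simp: condH_def Hent_pp Int_Un_distrib2)

definition hitc :: "nat set \<Rightarrow> nat set multiset \<Rightarrow> nat" where
  "hitc M A = size (filter_mset (\<lambda>Q. Q \<inter> M \<noteq> {}) A)"

lemma hitc_sum: "(\<Sum>Q\<in>#A. (if Q \<inter> M = {} then 0 else 1::real)) = real (hitc M A)"
  by (induction A) (auto simp: hitc_def)

lemma union_hit: "(\<Union>(set_mset A) \<inter> M \<noteq> {}) = (1 \<le> hitc M A)"
  by (induction A) (auto simp: hitc_def)

lemma valid_pp: assumes "M \<noteq> {}"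
  shows "valid (pp M) K = (fst K \<inter> M \<noteq> {} \<or> hitc M (snd K) \<le> 1)"
proof (cases "fst K \<inter> M = {}")
  case True
  have "(\<Sum>Q\<in>#snd K. condH (pp M) Q (fst K)) = (\<Sum>Q\<in>#snd K. (if Q \<inter> M = {} then 0 else 1::real))"
    using assms True by (intro arg_cong[where f=sum_mset] image_mset_cong) (simp add: condH_pp)
  then show ?thesis using True assms unfolding valid_def
    by (auto simp: hitc_sum condH_pp union_hit)
next
  case False
  then show ?thesis using assms unfolding valid_def by (simp add: condH_pp)
qed


definition sepm :: "nat set multiset \<Rightarrow> nat \<Rightarrow> nat \<Rightarrow> bool" where
  "sepm A a b = (\<exists>Q1 Q2. Q1 \<in># A \<and> Q2 \<in># A - {#Q1#} \<and> a \<in> Q1 \<and> b \<in> Q2)"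

definition occ :: "nat set multiset \<Rightarrow> nat \<Rightarrow> nat" where
  "occ A m = size (filter_mset (\<lambda>Q. m \<in> Q) A)"

lemma rep_idx_occ: "rep_idx A = {i. 2 \<le> occ A i}"
proof (cases "2 \<le> size A")
  case True then show ?thesis by (simp add: rep_idx_def occ_def)
next
  case False
  have "occ A i \<le> size A" for i unfolding occ_def by (rule size_filter_mset_lesseq)
  then show ?thesis using False by (auto simp: rep_idx_def) (meson le_trans not_le)
qed

lemma sepm_decomp:
  assumes "sepm A a b"
  obtains Q1 Q2 rest where "A = add_mset Q1 (add_mset Q2 rest)" "a \<in> Q1" "b \<in> Q2"
proof -
  obtain Q1 Q2 where q: "Q1 \<in># A" "Q2 \<in># A - {#Q1#}" "a \<in> Q1" "b \<in> Q2"
    using assms unfolding sepm_def by blast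
  have "A = add_mset Q1 (A - {#Q1#})" using q(1) by simp
  moreover have "A - {#Q1#} = add_mset Q2 (A - {#Q1#} - {#Q2#})" using q(2) by (rule insert_DiffM[symmetric])
  ultimately show ?thesis using that q by metis
qed

lemma sepm_intro: "sepm (add_mset Q1 (add_mset Q2 rest)) a b" if "a \<in> Q1" "b \<in> Q2"
  unfolding sepm_def using that by (intro exI[of _ Q1] exI[of _ Q2]) auto

lemma sepm_fwd:
  assumes "sepm A a b" "a \<notin> S" "b \<notin> S"
  shows "sepm (filter_mset (\<lambda>X. X \<noteq> {}) (image_mset (\<lambda>Q. Q - S) A)) a b"
proof -
  obtain Q1 Q2 rest where "A = add_mset Q1 (add_mset Q2 rest)" "a \<in> Q1" "b \<in> Q2"
    using sepm_decomp[OF assms(1)] by blast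
  then show ?thesis using assms by (auto intro!: sepm_intro)
qed

lemma sepm_bwd:
  assumes "sepm (filter_mset (\<lambda>X. X \<noteq> {}) (image_mset (\<lambda>Q. Q - S) A)) a b"
  shows "sepm A a b \<and> a \<notin> S \<and> b \<notin> S"
proof -
  let ?f = "\<lambda>Q. Q - S" and ?P = "\<lambda>X::nat set. X \<noteq> {}"
  obtain Q1 Q2 where q: "Q1 \<in># filter_mset ?P (image_mset ?f A)"
    "Q2 \<in># filter_mset ?P (image_mset ?f A) - {#Q1#}" "a \<in> Q1" "b \<in> Q2"
    using assms unfolding sepm_def by blast
  obtain Q1' where q1: "Q1' \<in># A" "Q1 = Q1' - S" using q(1) by auto
  define A0 where "A0 = A - {#Q1'#}"
  have A: "A = add_mset Q1' A0" using q1 A0_def by simp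
  have "filter_mset ?P (image_mset ?f A) - {#Q1#} = filter_mset ?P (image_mset ?f A0)"
    using q(3) q1 A by auto
  then obtain Q2' where q2: "Q2' \<in># A0" "Q2 = Q2' - S" using q(2) by auto
  have "sepm A a b" unfolding sepm_def
    using q1 q2 q A0_def by (intro exI[of _ Q1'] exI[of _ Q2']) auto
  then show ?thesis using q q1 q2 by auto
qed

lemma sepm_drop:
  assumes "sepm (A + B) a b" "\<forall>Q\<in>#A. a \<notin> Q \<and> b \<notin> Q"
  shows "sepm B a b"
proof -
  obtain Q1 Q2 where q: "Q1 \<in># A + B" "Q2 \<in># A + B - {#Q1#}" "a \<in> Q1" "b \<in> Q2"
    using assms unfolding sepm_def by blast
  have 1: "Q1 \<in># B" using q assms(2) by auto
  define B0 where "B0 = B - {#Q1#}"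
  have B: "B = add_mset Q1 B0" using 1 B0_def by simp
  have "A + B - {#Q1#} = A + B0" unfolding B by simp
  then have "Q2 \<in># B0" using q assms(2) by auto
  then show ?thesis using 1 q B0_def unfolding sepm_def by blast
qed

lemma sepm_empty: "\<not> sepm {#} a b" by (simp add: sepm_def)

lemma sepm_hitc: "sepm A a b \<Longrightarrow> 2 \<le> hitc {a,b} A"
  by (erule sepm_decomp) (auto simp: hitc_def)

lemma sepm_size: "sepm A a b \<Longrightarrow> 2 \<le> size A"
  by (erule sepm_decomp) auto

lemma hitc_le: "hitc {a,b} A \<le> occ A a + occ A b"
  by (induction A) (auto simp: hitc_def occ_def)

lemma occ_pos: "1 \<le> occ A m \<Longrightarrow> \<exists>Q\<in>#A. m \<in> Q"
  unfolding occ_def by (induction A) (auto split: if_splits)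

lemma sepm_from_hitc:
  assumes "2 \<le> hitc {a,b} A" "occ A a \<le> 1" "occ A b \<le> 1"
  shows "sepm A a b"
proof -
  have "occ A a \<ge> 1" using hitc_le[of a b A] assms by linarith
  then obtain Q1 where q1: "Q1 \<in># A" "a \<in> Q1" using occ_pos by blast
  define rest where "rest = A - {#Q1#}"
  have A: "A = add_mset Q1 rest" using q1 rest_def by simp
  have oa: "occ rest a = 0" using assms(2) q1 A by (simp add: occ_def)
  have "hitc {a,b} A = 1 + hitc {a,b} rest" using A q1 by (simp add: hitc_def)
  then have "1 \<le> hitc {a,b} rest" using assms(1) by linarith
  then have "occ rest b \<ge> 1" using hitc_le[of a b rest] oa by linarith
  then obtain Q2 where q2: "Q2 \<in># rest" "b \<in> Q2" using occ_pos by blast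
  show ?thesis unfolding sepm_def using q1 q2 rest_def by blast
qed

lemma hitc_pur: "C \<inter> M = {} \<Longrightarrow>
  hitc M (filter_mset (\<lambda>X. X \<noteq> {}) (image_mset (\<lambda>Q. Q - C) A)) = hitc M A"
  by (induction A) (auto simp: hitc_def)


abbreviation Psf :: "nat set \<Rightarrow> nat set multiset \<Rightarrow> nat set multiset" where
  "Psf S A \<equiv> filter_mset (\<lambda>X. X \<noteq> {}) (image_mset (\<lambda>Q. Q - S) A)"

lemma can_PK:
  assumes "can K = Some (C, dup (rep_idx (snd K)) + PK)"
  shows "C = fst K \<and> (PK = Psf (rep_idx (snd K)) (snd K) \<or> (PK = {#} \<and> size (Psf (rep_idx (snd K)) (snd K)) \<le> 1))"
  using assms unfolding can_def Let_def dup_def by (auto split: if_splits)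

lemma can_Q:
  assumes "can K = Some (C, Q)"
  shows "C = fst K \<and> (Q - dup (rep_idx (snd K)) = {#} \<or> Q - dup (rep_idx (snd K)) = Psf (rep_idx (snd K)) (snd K))"
  using assms unfolding can_def Let_def dup_def by (auto split: if_splits)

lemma R_shape:
  assumes "R K K' = Some K''"
  obtains C' Q' where "can (pur K') = Some (C', Q')"
    "K'' = (C' - IK K, Psf (IK K) (Q' - dup (IK K'))) \<or>
     (IK K' - IK K \<noteq> {} \<and> (K'' = (C' - IK K, {#IK K' - IK K, IK K' - IK K#}) \<or>
        K'' = (C' - IK K, {#IK K' - IK K, IK K' - IK K#} + Psf (IK K) (Q' - dup (IK K')))))"
proof (cases "can (pur K')")
  case None then show ?thesis using assms by (simp add: R_def)
next
  case (Some a)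
  obtain C' Q' where a: "a = (C', Q')" by (cases a)
  show ?thesis
    using assms Some a that unfolding R_def Let_def by (auto split: if_splits)
qed

lemma fst_pur: "fst (pur K) = fst K" by (simp add: pur_def)
lemma snd_pur: "snd (pur K) = Psf (fst K) (snd K)" by (simp add: pur_def)

theorem mainTheorem10:
  fixes n :: nat and K K' K'' :: cmi and C C'' :: "nat set"
    and PK PK'' :: "nat set multiset" and P1 P2 :: "nat set" and m1 m2 :: nat
  assumes "wf_cmi n K" and "wf_cmi n K'"
    and "\<not> degenerate n K" and "\<not> degenerate n K'"
    and "can (pur K) = Some (C, dup (IK K) + PK)"
    and "R K K' = Some K''"
    and "can (pur K'') = Some (C'', dup (IK K'') + PK'')"
    and "cmi_implies n K K'"
    and "P1 \<in># PK''" and "P2 \<in># PK'' - {#P1#}"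
    and "m1 \<in> P1" and "m2 \<in> P2"
  shows "\<exists>Q1 Q2. Q1 \<in># PK \<and> Q2 \<in># PK - {#Q1#} \<and> m1 \<in> Q1 \<and> m2 \<in> Q2"
proof -
  define M where "M = {m1, m2}"
  have Mne: "M \<noteq> {}" by (simp add: M_def)
  have sPK'': "sepm PK'' m1 m2" unfolding sepm_def using assms(9-12) by blast
  have c7: "C'' = fst K'' \<and> (PK'' = Psf (IK K'') (snd (pur K'')) \<or> (PK'' = {#} \<and> size (Psf (IK K'') (snd (pur K''))) \<le> 1))"
    using can_PK[of "pur K''" C'' PK''] assms(7) by (simp add: IK_def fst_pur)
  have "PK'' \<noteq> {#}" using assms(9) by auto
  then have "sepm (Psf (IK K'') (snd (pur K''))) m1 m2" using c7 sPK'' by auto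
  then have s1: "sepm (snd (pur K'')) m1 m2" and nI'': "m1 \<notin> IK K''" "m2 \<notin> IK K''"
    using sepm_bwd by blast+
  then have s2: "sepm (snd K'') m1 m2" and nC'': "m1 \<notin> fst K''" "m2 \<notin> fst K''"
    unfolding snd_pur using sepm_bwd by blast+
  have occ1: "occ (snd (pur K'')) m1 \<le> 1" "occ (snd (pur K'')) m2 \<le> 1"
    using nI'' unfolding IK_def rep_idx_occ by auto
  obtain C' Q' where cK': "can (pur K') = Some (C', Q')" and
    shp: "K'' = (C' - IK K, Psf (IK K) (Q' - dup (IK K'))) \<or>
     (IK K' - IK K \<noteq> {} \<and> (K'' = (C' - IK K, {#IK K' - IK K, IK K' - IK K#}) \<or>
        K'' = (C' - IK K, {#IK K' - IK K, IK K' - IK K#} + Psf (IK K) (Q' - dup (IK K')))))"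
    using R_shape[OF assms(6)] by blast
  define D where "D = IK K' - IK K"
  define Ts where "Ts = Psf (IK K) (Q' - dup (IK K'))"
  have notD: "m \<notin> D" if "m \<in> {m1, m2}" "snd K'' = {#D, D#} + X" for m X
  proof
    assume mD: "m \<in> D"
    have "m \<notin> fst K''" using nC'' that(1) by auto
    then have "D - fst K'' \<noteq> {}" "m \<in> D - fst K''" using mD by auto
    then have "2 \<le> occ (snd (pur K'')) m" unfolding snd_pur that(2) occ_def by simp
    then show False using occ1 that(1) by auto
  qed
  have sTs: "sepm Ts m1 m2"
  proof -
    consider (a) "snd K'' = Ts" | (b) "snd K'' = {#D, D#}" | (c) "snd K'' = {#D, D#} + Ts"
      using shp unfolding D_def Ts_def by auto
    then show ?thesis
    proof cases
      case a then show ?thesis using s2 by simp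
    next
      case b
      have "sepm ({#D, D#} + {#}) m1 m2" using s2 b by simp
      then have "sepm {#} m1 m2" by (rule sepm_drop) (use notD[of _ "{#}"] b in auto)
      then show ?thesis by (simp add: sepm_empty)
    next
      case c
      have "sepm ({#D, D#} + Ts) m1 m2" using s2 c by simp
      then show ?thesis by (rule sepm_drop) (use notD[of _ Ts] c in auto)
    qed
  qed
  then have s3: "sepm (Q' - dup (IK K')) m1 m2" and nI: "m1 \<notin> IK K" "m2 \<notin> IK K"
    unfolding Ts_def using sepm_bwd by blast+
  have fK'': "fst K'' = C' - IK K" using shp by auto
  have cq: "C' = fst K' \<and> (Q' - dup (IK K') = {#} \<or> Q' - dup (IK K') = Psf (IK K') (snd (pur K')))"
    using can_Q[OF cK'] by (simp add: IK_def fst_pur)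
  then have "sepm (Psf (IK K') (snd (pur K'))) m1 m2" using s3 sepm_empty by metis
  then have "sepm (snd (pur K')) m1 m2" using sepm_bwd by blast
  then have s4: "sepm (snd K') m1 m2" unfolding snd_pur using sepm_bwd by blast
  have nC': "fst K' \<inter> M = {}" using nC'' nI fK'' cq by (auto simp: M_def)
  have "\<not> valid (pp M) K'"
    using valid_pp[OF Mne] nC' sepm_hitc[OF s4] by (simp add: M_def)
  then have nv: "\<not> valid (pp M) K"
    using assms(8) dist_ok_pp unfolding cmi_implies_def by blast
  then have nC: "fst K \<inter> M = {}" and h: "2 \<le> hitc M (snd K)"
    using valid_pp[OF Mne] by auto
  have h2: "2 \<le> hitc {m1, m2} (snd (pur K))"
    using h hitc_pur[OF nC] unfolding snd_pur M_def by simp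
  have occK: "occ (snd (pur K)) m1 \<le> 1" "occ (snd (pur K)) m2 \<le> 1"
    using nI unfolding IK_def rep_idx_occ by auto
  have "sepm (snd (pur K)) m1 m2" by (rule sepm_from_hitc[OF h2 occK])
  then have sP: "sepm (Psf (IK K) (snd (pur K))) m1 m2" using sepm_fwd nI by blast
  have "C = fst K \<and> (PK = Psf (IK K) (snd (pur K)) \<or> (PK = {#} \<and> size (Psf (IK K) (snd (pur K))) \<le> 1))"
    using can_PK[of "pur K" C PK] assms(5) by (simp add: IK_def fst_pur)
  then have "PK = Psf (IK K) (snd (pur K))" using sepm_size[OF sP] by auto
  then show ?thesis using sP unfolding sepm_def by blast
qed

end
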